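(* If a central extension $0\to(M,\alpha_M)\to(K,\alpha_K)\xrightarrow{\pi}(L,\alpha_L)\to0$ of Hom-Leibniz $n$-algebras is a universal $\alpha$-central extension, then $(K,\alpha_K)$ is perfect and every central extension $\rho:(F,\alpha_F)\to(K,\alpha_K)$ of $(K,\alpha_K)$ splits (there is a homomorphism $\sigma:K\to F$ with $\rho\circ\sigma=\mathrm{id}_K$).
   Context: Fix a field $\mathbb K$ and $n\ge2$. A (multiplicative) Hom-Leibniz $n$-algebra is a $\mathbb K$-vector space $L$ with an $n$-linear bracket and a linear map $\alpha_L$ preserving the bracket, satisfying $[[x_1,\dots,x_n],\alpha_L(y_1),\dots,\alpha_L(y_{n-1})]=\sum_{i=1}^n[\alpha_L(x_1),\dots,[x_i,y_1,\dots,y_{n-1}],\dots,\alpha_L(x_n)]$. Homomorphisms preserve brackets and commute with twisting maps. Perfect: $K=[K,\dots,K]$. Center $Z(K)$: elements $x$ such that every bracket with $x$ in some position equals $0$. An extension of $L$ is a surjective homomorphism $\pi:K\to L$ with kernel $M$; central if $M\subseteq Z(K)$; $\alpha$-central if every bracket with $n-1$ entries in $\alpha_K(M)$ and the remaining entry (any position) in $K$ vanishes. A central extension $\pi$ is universal $\alpha$-central if for every $\alpha$-central extension $\pi':K'\to L$ there is a unique homomorphism $h:K\to K'$ with $\pi'\circ h=\pi$. *)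

theory Defs
  imports Main "HOL.Vector_Spaces" "HOL-Library.Product_Plus"
begin

text \<open>A Hom-Leibniz n-algebra over a field of type 'a is represented by a type 'v
(the underlying vector space, with scalar multiplication s), an n-ary bracket
br, taking a list of n arguments, and a twisting map al.\<close>

definition nlinear :: "nat \<Rightarrow> ('a::field \<Rightarrow> 'v::ab_group_add \<Rightarrow> 'v) \<Rightarrow> ('v list \<Rightarrow> 'v) \<Rightarrow> bool" where
  "nlinear n s br \<longleftrightarrow>
     (\<forall>xs i. length xs = n \<and> i < n \<longrightarrow> Vector_Spaces.linear s s (\<lambda>y. br (xs[i := y])))"

definition hom_leibniz :: "nat \<Rightarrow> ('a::field \<Rightarrow> 'v::ab_group_add \<Rightarrow> 'v) \<Rightarrow> ('v list \<Rightarrow> 'v) \<Rightarrow> ('v \<Rightarrow> 'v) \<Rightarrow> bool" where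
  "hom_leibniz n s br al \<longleftrightarrow>
     vector_space s \<and> nlinear n s br \<and> Vector_Spaces.linear s s al \<and>
     (\<forall>xs. length xs = n \<longrightarrow> al (br xs) = br (map al xs)) \<and>
     (\<forall>xs ys. length xs = n \<and> length ys = n - 1 \<longrightarrow>
        br (br xs # map al ys) =
        (\<Sum>i<n. br ((map al xs)[i := br (xs ! i # ys)])))"

definition hl_hom :: "nat \<Rightarrow> ('a::field \<Rightarrow> 'v::ab_group_add \<Rightarrow> 'v) \<Rightarrow> ('v list \<Rightarrow> 'v) \<Rightarrow> ('v \<Rightarrow> 'v)
     \<Rightarrow> ('a \<Rightarrow> 'w::ab_group_add \<Rightarrow> 'w) \<Rightarrow> ('w list \<Rightarrow> 'w) \<Rightarrow> ('w \<Rightarrow> 'w) \<Rightarrow> ('v \<Rightarrow> 'w) \<Rightarrow> bool" where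
  "hl_hom n s1 br1 al1 s2 br2 al2 f \<longleftrightarrow>
     Vector_Spaces.linear s1 s2 f \<and>
     (\<forall>xs. length xs = n \<longrightarrow> f (br1 xs) = br2 (map f xs)) \<and>
     (\<forall>x. f (al1 x) = al2 (f x))"

definition perfect :: "nat \<Rightarrow> ('a::field \<Rightarrow> 'v::ab_group_add \<Rightarrow> 'v) \<Rightarrow> ('v list \<Rightarrow> 'v) \<Rightarrow> bool" where
  "perfect n s br \<longleftrightarrow> module.span s {br xs | xs. length xs = n} = UNIV"

definition center :: "nat \<Rightarrow> ('v list \<Rightarrow> 'v::ab_group_add) \<Rightarrow> 'v set" where
  "center n br = {x. \<forall>xs i. length xs = n \<and> i < n \<longrightarrow> br (xs[i := x]) = 0}"

definition hl_extension :: "nat \<Rightarrow> ('a::field \<Rightarrow> 'k::ab_group_add \<Rightarrow> 'k) \<Rightarrow> ('k list \<Rightarrow> 'k) \<Rightarrow> ('k \<Rightarrow> 'k)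
     \<Rightarrow> ('a \<Rightarrow> 'l::ab_group_add \<Rightarrow> 'l) \<Rightarrow> ('l list \<Rightarrow> 'l) \<Rightarrow> ('l \<Rightarrow> 'l) \<Rightarrow> ('k \<Rightarrow> 'l) \<Rightarrow> bool" where
  "hl_extension n sK brK aK sL brL aL p \<longleftrightarrow>
     hom_leibniz n sK brK aK \<and> hom_leibniz n sL brL aL \<and>
     hl_hom n sK brK aK sL brL aL p \<and> surj p"

definition central_ext :: "nat \<Rightarrow> ('a::field \<Rightarrow> 'k::ab_group_add \<Rightarrow> 'k) \<Rightarrow> ('k list \<Rightarrow> 'k) \<Rightarrow> ('k \<Rightarrow> 'k)
     \<Rightarrow> ('a \<Rightarrow> 'l::ab_group_add \<Rightarrow> 'l) \<Rightarrow> ('l list \<Rightarrow> 'l) \<Rightarrow> ('l \<Rightarrow> 'l) \<Rightarrow> ('k \<Rightarrow> 'l) \<Rightarrow> bool" where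
  "central_ext n sK brK aK sL brL aL p \<longleftrightarrow>
     hl_extension n sK brK aK sL brL aL p \<and> {x. p x = 0} \<subseteq> center n brK"

definition alpha_central_ext :: "nat \<Rightarrow> ('a::field \<Rightarrow> 'k::ab_group_add \<Rightarrow> 'k) \<Rightarrow> ('k list \<Rightarrow> 'k) \<Rightarrow> ('k \<Rightarrow> 'k)
     \<Rightarrow> ('a \<Rightarrow> 'l::ab_group_add \<Rightarrow> 'l) \<Rightarrow> ('l list \<Rightarrow> 'l) \<Rightarrow> ('l \<Rightarrow> 'l) \<Rightarrow> ('k \<Rightarrow> 'l) \<Rightarrow> bool" where
  "alpha_central_ext n sK brK aK sL brL aL p \<longleftrightarrow>
     hl_extension n sK brK aK sL brL aL p \<and>
     (\<forall>xs i. length xs = n \<and> i < n \<and>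
        (\<forall>j<n. j \<noteq> i \<longrightarrow> xs ! j \<in> aK ` {x. p x = 0}) \<longrightarrow> brK xs = 0)"

text \<open>Universal alpha-central extension, with the universal property tested against
all alpha-central extensions of L whose underlying space is (a vector space
structure on) the type 'b.  HOL cannot quantify over types inside a formula,
so the type of test extensions is a parameter.\<close>

definition univ_alpha_central :: "'b::ab_group_add itself \<Rightarrow> nat \<Rightarrow> ('a::field \<Rightarrow> 'k::ab_group_add \<Rightarrow> 'k)
     \<Rightarrow> ('k list \<Rightarrow> 'k) \<Rightarrow> ('k \<Rightarrow> 'k)
     \<Rightarrow> ('a \<Rightarrow> 'l::ab_group_add \<Rightarrow> 'l) \<Rightarrow> ('l list \<Rightarrow> 'l) \<Rightarrow> ('l \<Rightarrow> 'l) \<Rightarrow> ('k \<Rightarrow> 'l) \<Rightarrow> bool" where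
  "univ_alpha_central T n sK brK aK sL brL aL p \<longleftrightarrow>
     central_ext n sK brK aK sL brL aL p \<and>
     (\<forall>(sB :: 'a \<Rightarrow> 'b \<Rightarrow> 'b) brB aB q.
        alpha_central_ext n sB brB aB sL brL aL q \<longrightarrow>
        (\<exists>!h. hl_hom n sK brK aK sB brB aB h \<and> (\<forall>x. q (h x) = p x)))"

end

theory Submission
  imports Defs
begin

definition prodS :: "('a::field \<Rightarrow> 'k::ab_group_add \<Rightarrow> 'k) \<Rightarrow> 'a \<Rightarrow> 'k \<times> 'k \<Rightarrow> 'k \<times> 'k" where
  "prodS s = (\<lambda>a z. (s a (fst z), s a (snd z)))"

definition brP :: "('k list \<Rightarrow> 'k::ab_group_add) \<Rightarrow> ('k \<times> 'k) list \<Rightarrow> 'k \<times> 'k" where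
  "brP br = (\<lambda>xs. (br (map fst xs), 0))"

definition aP :: "('k \<Rightarrow> 'k) \<Rightarrow> ('k \<Rightarrow> 'k) \<Rightarrow> 'k \<times> 'k \<Rightarrow> 'k \<times> 'k" where
  "aP al be = (\<lambda>z. (al (fst z), be (snd z)))"

lemma lin0: "Vector_Spaces.linear s1 s2 f \<Longrightarrow> f 0 = 0"
  by (metis linear_iff add_cancel_right_right)

lemma vs_prod: "vector_space s \<Longrightarrow> vector_space (prodS s)"
  unfolding vector_space_def prodS_def by (auto simp: prod_eq_iff)

lemma lin_prod:
  assumes "vector_space s" "Vector_Spaces.linear s s f" "Vector_Spaces.linear s s g"
  shows "Vector_Spaces.linear (prodS s) (prodS s) (\<lambda>z. (f (fst z), g (snd z)))"
  using assms vs_prod[OF assms(1)] unfolding linear_iff prodS_def by auto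

lemma lin_prod2:
  assumes "vector_space s" "Vector_Spaces.linear s s f" "Vector_Spaces.linear s s g"
  shows "Vector_Spaces.linear s (prodS s) (\<lambda>z. (f z, g z))"
  using assms vs_prod[OF assms(1)] unfolding linear_iff prodS_def by auto

lemma hl_prod:
  assumes H: "hom_leibniz n s br al" and be: "Vector_Spaces.linear s s be"
  shows "hom_leibniz n (prodS s) (brP br) (aP al be)"
proof -
  have vs: "vector_space s" and nl: "nlinear n s br" and la: "Vector_Spaces.linear s s al"
    and mu: "\<And>xs. length xs = n \<Longrightarrow> al (br xs) = br (map al xs)"
    and le: "\<And>xs ys. length xs = n \<Longrightarrow> length ys = n - 1 \<Longrightarrow>
        br (br xs # map al ys) = (\<Sum>i<n. br ((map al xs)[i := br (xs ! i # ys)]))"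
    using H unfolding hom_leibniz_def by auto
  have "nlinear n (prodS s) (brP br)"
    unfolding nlinear_def
  proof (intro allI impI)
    fix xs :: "('b \<times> 'b) list" and i assume a: "length xs = n \<and> i < n"
    then have l: "Vector_Spaces.linear s s (\<lambda>y. br ((map fst xs)[i := y]))"
      using nl unfolding nlinear_def by auto
    have l2: "Vector_Spaces.linear s s (\<lambda>y. 0::'b)" using vs by (simp add: linear_iff module.scale_zero_right module_iff_vector_space)
    have "Vector_Spaces.linear (prodS s) (prodS s)
       (\<lambda>z. ((\<lambda>y. br ((map fst xs)[i := y])) (fst z), (\<lambda>y. 0) (snd z)))"
      by (rule lin_prod[OF vs l l2])
    then show "Vector_Spaces.linear (prodS s) (prodS s) (\<lambda>y. brP br (xs[i := y]))"
      by (simp add: brP_def map_update)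
  qed
  moreover have "Vector_Spaces.linear (prodS s) (prodS s) (aP al be)"
    using lin_prod[OF vs la be] by (simp add: aP_def)
  moreover have "\<forall>xs. length xs = n \<longrightarrow> aP al be (brP br xs) = brP br (map (aP al be) xs)"
    using mu lin0[OF be] by (simp add: aP_def brP_def comp_def)
  moreover have "\<forall>xs ys. length xs = n \<and> length ys = n - 1 \<longrightarrow>
        brP br (brP br xs # map (aP al be) ys) =
        (\<Sum>i<n. brP br ((map (aP al be) xs)[i := brP br (xs ! i # ys)]))"
  proof (intro allI impI)
    fix xs ys :: "('b \<times> 'b) list" assume a: "length xs = n \<and> length ys = n - 1"
    have "(\<Sum>i<n. brP br ((map (aP al be) xs)[i := brP br (xs ! i # ys)]))
        = (\<Sum>i<n. (br ((map al (map fst xs))[i := br ((map fst xs) ! i # map fst ys)]), 0))"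
      by (rule sum.cong) (use a in \<open>auto simp: brP_def aP_def map_update comp_def\<close>)
    also have "\<dots> = (br (br (map fst xs) # map al (map fst ys)), 0)"
      using le[of "map fst xs" "map fst ys"] a by (simp add: sum_prod)
    finally show "brP br (brP br xs # map (aP al be) ys) =
        (\<Sum>i<n. brP br ((map (aP al be) xs)[i := brP br (xs ! i # ys)]))"
      by (simp add: brP_def aP_def comp_def)
  qed
  ultimately show ?thesis using vs_prod[OF vs] unfolding hom_leibniz_def by blast
qed


lemma center_zero:
  assumes "length zs = n" "j < n" "zs ! j \<in> center n br"
  shows "br zs = 0"
proof -
  have "br (zs[j := zs ! j]) = 0" using assms unfolding center_def by blast
  then show ?thesis by simp
qed

lemma ker_alpha:
  assumes "hl_hom n sK brK aK sL brL aL p" "hom_leibniz n sL brL aL" "p y = 0"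
  shows "p (aK y) = 0"
proof -
  have "p (aK y) = aL (p y)" using assms(1) unfolding hl_hom_def by blast
  moreover have "Vector_Spaces.linear sL sL aL" using assms(2) unfolding hom_leibniz_def by blast
  ultimately show ?thesis using assms(3) lin0 by metis
qed

lemma alpha_prod:
  fixes sK :: "'a::field \<Rightarrow> 'k::ab_group_add \<Rightarrow> 'k"
  assumes C: "central_ext n sK brK aK sL brL aL p" and n: "n \<ge> 2"
    and be: "Vector_Spaces.linear sK sK be"
  shows "alpha_central_ext n (prodS sK) (brP brK) (aP aK be) sL brL aL (\<lambda>z. p (fst z))"
proof -
  have HK: "hom_leibniz n sK brK aK" and HL: "hom_leibniz n sL brL aL"
    and hp: "hl_hom n sK brK aK sL brL aL p" and sp: "surj p"
    and cen: "{x. p x = 0} \<subseteq> center n brK"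
    using C unfolding central_ext_def hl_extension_def by auto
  have vsK: "vector_space sK" using HK unfolding hom_leibniz_def by blast
  have lp: "Vector_Spaces.linear sK sL p" using hp unfolding hl_hom_def by blast
  have "Vector_Spaces.linear (prodS sK) sL (\<lambda>z. p (fst z))"
    using lp vs_prod[OF vsK] unfolding linear_iff by (auto simp: prodS_def)
  moreover have "\<forall>xs. length xs = n \<longrightarrow> p (fst (brP brK xs)) = brL (map (\<lambda>z. p (fst z)) xs)"
    using hp unfolding hl_hom_def by (auto simp: brP_def comp_def)
  moreover have "\<forall>x. p (fst (aP aK be x)) = aL (p (fst x))"
    using hp unfolding hl_hom_def by (auto simp: aP_def)
  ultimately have hq: "hl_hom n (prodS sK) (brP brK) (aP aK be) sL brL aL (\<lambda>z. p (fst z))"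
    unfolding hl_hom_def by blast
  have sq: "surj (\<lambda>z::'k\<times>'k. p (fst z))"
  proof -
    { fix y obtain x where "y = p x" using sp by blast
      then have "y \<in> range (\<lambda>z::'k\<times>'k. p (fst z))"
        using rangeI[of "\<lambda>z::'k\<times>'k. p (fst z)" "(x, 0::'k)"] by simp }
    then show ?thesis by blast
  qed
  have ac: "\<forall>xs i. length xs = n \<and> i < n \<and>
        (\<forall>j<n. j \<noteq> i \<longrightarrow> xs ! j \<in> aP aK be ` {x. p (fst x) = 0}) \<longrightarrow> brP brK xs = 0"
  proof (intro allI impI)
    fix xs :: "('k \<times> 'k) list" and i
    assume a: "length xs = n \<and> i < n \<and> (\<forall>j<n. j \<noteq> i \<longrightarrow> xs ! j \<in> aP aK be ` {x. p (fst x) = 0})"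
    define j where "j = (if i = 0 then 1 else 0::nat)"
    have j: "j < n" "j \<noteq> i" using n a by (auto simp: j_def)
    then obtain z where z: "p (fst z) = 0" "xs ! j = aP aK be z" using a by blast
    have "p (aK (fst z)) = 0" using ker_alpha[OF hp HL z(1)] .
    then have "(map fst xs) ! j \<in> center n brK" using cen z(2) j a by (auto simp: aP_def)
    then have "brK (map fst xs) = 0" using center_zero[of "map fst xs" n j brK] j a by simp
    then show "brP brK xs = 0" by (simp add: brP_def zero_prod_def)
  qed
  show ?thesis unfolding alpha_central_ext_def hl_extension_def
    using hl_prod[OF HK be] HL hq sq ac by blast
qed

lemma hom_prod:
  assumes f: "hl_hom n sK brK aK sK brK aK f" and g: "Vector_Spaces.linear sK sK g"
    and gb: "\<And>xs. length xs = n \<Longrightarrow> g (brK xs) = 0" and ga: "\<And>x. g (aK x) = be (g x)"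
  shows "hl_hom n sK brK aK (prodS sK) (brP brK) (aP aK be) (\<lambda>x. (f x, g x))"
proof -
  have lf: "Vector_Spaces.linear sK sK f" using f unfolding hl_hom_def by blast
  have vs: "vector_space sK" using lf unfolding linear_iff by blast
  show ?thesis unfolding hl_hom_def
    using lin_prod2[OF vs lf g] f gb ga unfolding hl_hom_def by (auto simp: brP_def aP_def comp_def)
qed

lemma hom_comp:
  assumes "hl_hom n s1 b1 a1 s2 b2 a2 f" "hl_hom n s2 b2 a2 s3 b3 a3 g"
  shows "hl_hom n s1 b1 a1 s3 b3 a3 (\<lambda>x. g (f x))"
proof -
  have "Vector_Spaces.linear s1 s3 (g \<circ> f)"
    using assms Vector_Spaces.linear_compose unfolding hl_hom_def by blast
  then show ?thesis using assms unfolding hl_hom_def by (auto simp: comp_def)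
qed

lemma hom_id:
  assumes "hom_leibniz n sK brK aK"
  shows "hl_hom n sK brK aK sK brK aK (\<lambda>x. x)"
  using assms unfolding hl_hom_def hom_leibniz_def linear_iff by auto

lemma univ_eq:
  fixes sK :: "'a::field \<Rightarrow> 'k::ab_group_add \<Rightarrow> 'k"
  assumes U: "univ_alpha_central TYPE('k::ab_group_add \<times> 'k) n sK brK aK sL brL aL p" and n: "n \<ge> 2"
    and be: "Vector_Spaces.linear sK sK be"
    and h1: "hl_hom n sK brK aK (prodS sK) (brP brK) (aP aK be) h1" "\<forall>x. p (fst (h1 x)) = p x"
    and h2: "hl_hom n sK brK aK (prodS sK) (brP brK) (aP aK be) h2" "\<forall>x. p (fst (h2 x)) = p x"
  shows "h1 = h2"
proof -
  have C: "central_ext n sK brK aK sL brL aL p"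
   and E: "\<And>(sB :: 'a \<Rightarrow> 'k \<times> 'k \<Rightarrow> 'k \<times> 'k) brB aB q.
        alpha_central_ext n sB brB aB sL brL aL q \<Longrightarrow>
        (\<exists>!h. hl_hom n sK brK aK sB brB aB h \<and> (\<forall>x. q (h x) = p x))"
    using U unfolding univ_alpha_central_def by auto
  have "\<exists>!h. hl_hom n sK brK aK (prodS sK) (brP brK) (aP aK be) h \<and> (\<forall>x. p (fst (h x)) = p x)"
    using E[OF alpha_prod[OF C n be]] by simp
  then show ?thesis using h1 h2 by blast
qed


lemma perfect_of_univ:
  fixes sK :: "'a::field \<Rightarrow> 'k::ab_group_add \<Rightarrow> 'k"
  assumes U: "univ_alpha_central TYPE('k \<times> 'k) n sK brK aK sL brL aL p" and n: "n \<ge> 2"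
  shows "perfect n sK brK"
proof -
  have C: "central_ext n sK brK aK sL brL aL p" using U unfolding univ_alpha_central_def by blast
  have HK: "hom_leibniz n sK brK aK" using C unfolding central_ext_def hl_extension_def by blast
  have vsK: "vector_space sK" and la: "Vector_Spaces.linear sK sK aK"
    and mu: "\<And>xs. length xs = n \<Longrightarrow> aK (brK xs) = brK (map aK xs)"
    using HK unfolding hom_leibniz_def by auto
  interpret K: vector_space sK by (rule vsK)
  interpret KK: vector_space_pair sK sK by unfold_locales
  define Br where "Br = {brK xs | xs. length xs = n}"
  define S where "S = K.span Br"
  show ?thesis
  proof (rule ccontr)
    assume np: "\<not> perfect n sK brK"
    then have SU: "S \<noteq> UNIV" unfolding perfect_def S_def Br_def by simp
    obtain B0 where B0: "B0 \<subseteq> Br" "K.independent B0" "Br \<subseteq> K.span B0"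
      by (rule K.maximal_independent_subset)
    obtain B where B: "B0 \<subseteq> B" "B \<subseteq> UNIV" "K.independent B" "UNIV \<subseteq> K.span B"
      by (rule K.maximal_independent_subset_extend[of B0 UNIV, OF _ B0(2)]) auto
    obtain g where g: "Vector_Spaces.linear sK sK g" "\<forall>x\<in>B. g x = (if x \<in> B0 then 0 else x)"
      using KK.linear_independent_extend[OF B(3), of "\<lambda>x. if x \<in> B0 then 0 else x"] by blast
    have mg: "module_hom sK sK g" using g(1) by (simp add: linear_iff_module_hom)
    have gB0: "g x = 0" if "x \<in> K.span B0" for x
    proof (rule module_hom.eq_0_on_span[OF mg, of B0 x])
      fix y assume "y \<in> B0" then show "g y = 0" using g(2) B(1) by auto
    qed (rule that)
    have gS: "g x = 0" if "x \<in> S" for x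
    proof (rule module_hom.eq_0_on_span[OF mg, of Br x])
      fix y assume "y \<in> Br" then show "g y = 0" using gB0 B0(3) by auto
    qed (use that in \<open>simp add: S_def\<close>)
    have ma: "module_hom sK sK aK" using la by (simp add: linear_iff_module_hom)
    have aBr: "aK ` Br \<subseteq> Br" unfolding Br_def using mu by force
    have aS: "\<And>x. x \<in> S \<Longrightarrow> aK x \<in> S"
    proof -
      fix x assume "x \<in> S"
      then have "aK x \<in> aK ` K.span Br" unfolding S_def by blast
      also have "\<dots> = K.span (aK ` Br)" using module_hom.span_image[OF ma] by simp
      also have "\<dots> \<subseteq> K.span Br" using K.span_mono[OF aBr] .
      finally show "aK x \<in> S" unfolding S_def .
    qed
    have BrS: "Br \<subseteq> S" unfolding S_def by (rule K.span_superset)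
    obtain be where be: "Vector_Spaces.linear sK sK be"
        "\<forall>x\<in>B. be x = (if x \<in> B0 then 0 else g (aK x))"
      using KK.linear_independent_extend[OF B(3), of "\<lambda>x. if x \<in> B0 then 0 else g (aK x)"] by blast
    have comp: "\<And>x. g (aK x) = be (g x)"
    proof -
      fix x
      have l1: "Vector_Spaces.linear sK sK (g \<circ> aK)" using Vector_Spaces.linear_compose[OF la g(1)] .
      have l2: "Vector_Spaces.linear sK sK (be \<circ> g)" using Vector_Spaces.linear_compose[OF g(1) be(1)] .
      have "(g \<circ> aK) x = (be \<circ> g) x"
      proof (rule KK.linear_eq_on[OF l1 l2])
        show "x \<in> K.span B" using B(4) by blast
      next
        fix b assume b: "b \<in> B"
        show "(g \<circ> aK) b = (be \<circ> g) b"
        proof (cases "b \<in> B0")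
          case True
          then have "b \<in> S" using B0(1) BrS by blast
          then have "g (aK b) = 0" using aS gS by blast
          moreover have "g b = 0" using True b g(2) by simp
          ultimately show ?thesis using lin0[OF be(1)] by simp
        next
          case False
          then show ?thesis using b g(2) be(2) by simp
        qed
      qed
      then show "g (aK x) = be (g x)" by simp
    qed
    have hid: "hl_hom n sK brK aK sK brK aK (\<lambda>x. x)" by (rule hom_id[OF HK])
    have l0: "Vector_Spaces.linear sK sK (\<lambda>x. 0)" using KK.linear_zero by simp
    have gb: "g (brK xs) = 0" if "length xs = n" for xs
      using gS BrS that unfolding Br_def by auto
    have be0: "0 = be 0" using lin0[OF be(1)] by simp
    have h1: "hl_hom n sK brK aK (prodS sK) (brP brK) (aP aK be) (\<lambda>x. (x, 0))"
      by (rule hom_prod[OF hid l0]) (rule refl, rule be0)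
    have h2: "hl_hom n sK brK aK (prodS sK) (brP brK) (aP aK be) (\<lambda>x. (x, g x))"
      by (rule hom_prod[OF hid g(1)]) (rule gb, assumption, rule comp)
    have "(\<lambda>x. (x, 0)) = (\<lambda>x. (x, g x))"
      using univ_eq[OF U n be(1) h1 _ h2] by simp
    then have g0: "\<And>x. g x = 0" by (metis prod.inject)
    have "\<not> B \<subseteq> B0"
    proof
      assume "B \<subseteq> B0"
      then have "K.span B \<subseteq> K.span Br" using B0(1) K.span_mono by blast
      then show False using B(4) SU unfolding S_def by blast
    qed
    then obtain b where b: "b \<in> B" "b \<notin> B0" by blast
    then have "g b = b" using g(2) by simp
    moreover have "b \<noteq> 0" using b(1) B(3) K.dependent_zero by metis
    ultimately show False using g0 by simp
  qed
qed


lemma comp_alpha: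
  fixes sF :: "'a::field \<Rightarrow> 'f::ab_group_add \<Rightarrow> 'f" and sK :: "'a \<Rightarrow> 'k::ab_group_add \<Rightarrow> 'k"
  assumes CR: "central_ext n sF brF aF sK brK aK r"
    and CP: "central_ext n sK brK aK sL brL aL p"
    and PK: "perfect n sK brK" and n: "n \<ge> 2"
  shows "alpha_central_ext n sF brF aF sL brL aL (\<lambda>z. p (r z))"
proof -
  have HF: "hom_leibniz n sF brF aF" and HK: "hom_leibniz n sK brK aK"
    and hr: "hl_hom n sF brF aF sK brK aK r" and sr: "surj r"
    and cenF: "{x. r x = 0} \<subseteq> center n brF"
    using CR unfolding central_ext_def hl_extension_def by auto
  have HL: "hom_leibniz n sL brL aL"
    and hp: "hl_hom n sK brK aK sL brL aL p" and sp: "surj p"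
    and cenK: "{x. p x = 0} \<subseteq> center n brK"
    using CP unfolding central_ext_def hl_extension_def by auto
  have vsF: "vector_space sF" and nlF: "nlinear n sF brF"
    and leib: "\<And>xs ys. length xs = n \<Longrightarrow> length ys = n - 1 \<Longrightarrow>
        brF (brF xs # map aF ys) = (\<Sum>i<n. brF ((map aF xs)[i := brF (xs ! i # ys)]))"
    using HF unfolding hom_leibniz_def by auto
  have lr: "Vector_Spaces.linear sF sK r" and rb: "\<And>xs. length xs = n \<Longrightarrow> r (brF xs) = brK (map r xs)"
    using hr unfolding hl_hom_def by auto
  have mr: "module_hom sF sK r" using lr by (simp add: linear_iff_module_hom)
  have hq: "hl_hom n sF brF aF sL brL aL (\<lambda>z. p (r z))" by (rule hom_comp[OF hr hp])
  have sq: "surj (\<lambda>z. p (r z))" using sr sp by (metis surj_def)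
  have K1: "r y \<in> center n brK" if "p (r y) = 0" for y using cenK that by blast
  have F1: "brF zs \<in> center n brF" if "length zs = n" "j < n" "r (zs ! j) \<in> center n brK" for zs j
  proof -
    have "r (brF zs) = brK (map r zs)" using rb that(1) .
    also have "\<dots> = 0" by (rule center_zero[of _ n j]) (use that in auto)
    finally show ?thesis using cenF by blast
  qed
  have D3: "brF ((map aF xs)[i := brF zs]) = 0"
    if xs: "length xs = n" "i < n" "\<forall>j<n. j \<noteq> i \<longrightarrow> p (r (xs ! j)) = 0" and zs: "length zs = n"
    for xs i zs
  proof -
    obtain z zt where zz: "zs = z # zt" using zs n by (cases zs) auto
    have lzt: "length zt = n - 1" using zz zs by simp
    define xs' where "xs' = xs[i := z]"
    have lx': "length xs' = n" using xs by (simp add: xs'_def)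
    have E: "brF (brF xs' # map aF zt) = (\<Sum>k<n. brF ((map aF xs')[k := brF (xs' ! k # zt)]))"
      by (rule leib[OF lx' lzt])
    define j where "j = (if i = 0 then 1 else 0::nat)"
    have j: "j < n" "j \<noteq> i" using n xs by (auto simp: j_def)
    have "brF xs' \<in> center n brF"
      by (rule F1[OF lx' j(1)]) (use j xs K1 in \<open>auto simp: xs'_def\<close>)
    then have "brF (brF xs' # map aF zt) = 0"
      by (intro center_zero[of _ n 0]) (use n lzt in auto)
    moreover have "(\<Sum>k<n. brF ((map aF xs')[k := brF (xs' ! k # zt)]))
        = brF ((map aF xs')[i := brF (xs' ! i # zt)])"
    proof -
      have "(\<Sum>k<n. brF ((map aF xs')[k := brF (xs' ! k # zt)]))
        = brF ((map aF xs')[i := brF (xs' ! i # zt)]) + (\<Sum>k\<in>{..<n} - {i}. brF ((map aF xs')[k := brF (xs' ! k # zt)]))"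
        using sum.remove[of "{..<n}" i] xs by simp
      moreover have "(\<Sum>k\<in>{..<n} - {i}. brF ((map aF xs')[k := brF (xs' ! k # zt)])) = 0"
      proof (rule sum.neutral, rule ballI)
        fix k assume k: "k \<in> {..<n} - {i}"
        have "brF (xs' ! k # zt) \<in> center n brF"
          by (rule F1[of _ 0]) (use k xs K1 lzt n in \<open>auto simp: xs'_def\<close>)
        then show "brF ((map aF xs')[k := brF (xs' ! k # zt)]) = 0"
          unfolding center_def using k lx' by auto
      qed
      ultimately show ?thesis by simp
    qed
    moreover have "(map aF xs')[i := brF (xs' ! i # zt)] = (map aF xs)[i := brF zs]"
      using xs zz by (simp add: xs'_def map_update)
    ultimately show ?thesis using E by simp
  qed
  have ac: "\<forall>xs i. length xs = n \<and> i < n \<and>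
        (\<forall>j<n. j \<noteq> i \<longrightarrow> xs ! j \<in> aF ` {x. p (r x) = 0}) \<longrightarrow> brF xs = 0"
  proof (intro allI impI)
    fix xs i assume a: "length xs = n \<and> i < n \<and> (\<forall>j<n. j \<noteq> i \<longrightarrow> xs ! j \<in> aF ` {x. p (r x) = 0})"
    define ys where "ys = map (\<lambda>j. if j = i then 0 else (SOME y. p (r y) = 0 \<and> xs ! j = aF y)) [0..<n]"
    have ly: "length ys = n" by (simp add: ys_def)
    have yj: "p (r (ys ! j)) = 0 \<and> xs ! j = aF (ys ! j)" if "j < n" "j \<noteq> i" for j
    proof -
      have "\<exists>y. p (r y) = 0 \<and> xs ! j = aF y" using a that by blast
      then have "p (r (SOME y. p (r y) = 0 \<and> xs ! j = aF y)) = 0 \<and> xs ! j = aF (SOME y. p (r y) = 0 \<and> xs ! j = aF y)"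
        by (rule someI_ex)
      then show ?thesis using that unfolding ys_def by simp
    qed
    have xe: "xs = (map aF ys)[i := xs ! i]"
      by (rule nth_equalityI) (use a ly yj in \<open>auto simp: nth_list_update\<close>)
    define Phi where "Phi = (\<lambda>w. brF ((map aF ys)[i := w]))"
    have lP: "Vector_Spaces.linear sF sF Phi" using nlF a ly unfolding nlinear_def Phi_def by simp
    have mP: "module_hom sF sF Phi" using lP by (simp add: linear_iff_module_hom)
    define BrF where "BrF = {brF zs | zs. length zs = n}"
    define BrK where "BrK = {brK ks | ks. length ks = n}"
    have PB: "Phi b = 0" if "b \<in> BrF" for b
      using that D3[of ys i] a ly yj unfolding BrF_def Phi_def by auto
    have PC: "Phi c = 0" if "r c = 0" for c
      using that cenF a ly unfolding Phi_def center_def by auto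
    have BK: "BrK \<subseteq> r ` BrF"
    proof
      fix k assume "k \<in> BrK"
      then obtain ks where ks: "k = brK ks" "length ks = n" unfolding BrK_def by blast
      define zs where "zs = map (\<lambda>k. SOME f. r f = k) ks"
      have "map r zs = ks" unfolding zs_def using sr
        by (simp add: comp_def surj_f_inv_f[OF sr, unfolded inv_def] map_idI)
      then have "k = r (brF zs)" using ks rb[of zs] by (simp add: zs_def)
      moreover have "brF zs \<in> BrF" using ks unfolding BrF_def zs_def by auto
      ultimately show "k \<in> r ` BrF" by blast
    qed
    have "brF xs = Phi (xs ! i)" unfolding Phi_def using xe by metis
    also have "\<dots> = 0"
    proof -
      let ?w = "xs ! i"
      have "r ?w \<in> module.span sK BrK" using PK unfolding perfect_def BrK_def by simp
      also have "\<dots> \<subseteq> module.span sK (r ` BrF)"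
        using BK module.span_mono[of sK] HK unfolding hom_leibniz_def module_iff_vector_space by blast
      also have "\<dots> = r ` module.span sF BrF" by (rule module_hom.span_image[OF mr])
      finally obtain u where u: "u \<in> module.span sF BrF" "r ?w = r u" by blast
      have "Phi u = 0" by (rule module_hom.eq_0_on_span[OF mP]) (use PB u in auto)
      moreover have "Phi (?w - u) = 0" by (rule PC) (simp add: module_hom.diff[OF mr] u)
      moreover have "Phi ?w = Phi u + Phi (?w - u)"
        using module_hom.add[OF mP, of u "?w - u"] by simp
      ultimately show ?thesis by simp
    qed
    finally show "brF xs = 0" .
  qed
  show ?thesis unfolding alpha_central_ext_def hl_extension_def
    using HF HL hq sq ac by blast
qed


theorem theorem3p11:
  fixes n :: nat
    and sK :: "'a::field \<Rightarrow> 'k::ab_group_add \<Rightarrow> 'k" and brK :: "'k list \<Rightarrow> 'k" and aK :: "'k \<Rightarrow> 'k"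
    and sL :: "'a \<Rightarrow> 'l::ab_group_add \<Rightarrow> 'l" and brL :: "'l list \<Rightarrow> 'l" and aL :: "'l \<Rightarrow> 'l"
    and p :: "'k \<Rightarrow> 'l"
  assumes "n \<ge> 2"
    and "univ_alpha_central TYPE('f::ab_group_add) n sK brK aK sL brL aL p"
    and "univ_alpha_central TYPE('k \<times> 'k) n sK brK aK sL brL aL p"
  shows "perfect n sK brK \<and>
    (\<forall>(sF :: 'a \<Rightarrow> 'f \<Rightarrow> 'f) brF aF r.
       central_ext n sF brF aF sK brK aK r \<longrightarrow>
       (\<exists>sigma. hl_hom n sK brK aK sF brF aF sigma \<and> (\<forall>x. r (sigma x) = x)))"
proof -
  have PK: "perfect n sK brK" by (rule perfect_of_univ[OF assms(3) assms(1)])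
  have CP: "central_ext n sK brK aK sL brL aL p" using assms(3) unfolding univ_alpha_central_def by blast
  have HK: "hom_leibniz n sK brK aK" using CP unfolding central_ext_def hl_extension_def by blast
  have vsK: "vector_space sK" using HK unfolding hom_leibniz_def by blast
  have l0: "Vector_Spaces.linear sK sK (\<lambda>x. 0)"
    using vsK by (simp add: linear_iff module.scale_zero_right module_iff_vector_space)
  have "\<exists>sigma. hl_hom n sK brK aK sF brF aF sigma \<and> (\<forall>x. r (sigma x) = x)"
    if CR: "central_ext n sF brF aF sK brK aK r"
    for sF :: "'a \<Rightarrow> 'f \<Rightarrow> 'f" and brF aF r
  proof -
    have AC: "alpha_central_ext n sF brF aF sL brL aL (\<lambda>z. p (r z))"
      by (rule comp_alpha[OF CR CP PK assms(1)])
    have "\<exists>!h. hl_hom n sK brK aK sF brF aF h \<and> (\<forall>x. p (r (h x)) = p x)"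
      using assms(2) AC unfolding univ_alpha_central_def by blast
    then obtain h where h: "hl_hom n sK brK aK sF brF aF h" "\<forall>x. p (r (h x)) = p x" by blast
    have hr: "hl_hom n sF brF aF sK brK aK r" using CR unfolding central_ext_def hl_extension_def by blast
    have rh: "hl_hom n sK brK aK sK brK aK (\<lambda>x. r (h x))" by (rule hom_comp[OF h(1) hr])
    have h1: "hl_hom n sK brK aK (prodS sK) (brP brK) (aP aK (\<lambda>x. 0)) (\<lambda>x. (x, 0))"
      by (rule hom_prod[OF hom_id[OF HK] l0]) auto
    have h2: "hl_hom n sK brK aK (prodS sK) (brP brK) (aP aK (\<lambda>x. 0)) (\<lambda>x. (r (h x), 0))"
      by (rule hom_prod[OF rh l0]) auto
    have "(\<lambda>x. (x, 0::'k)) = (\<lambda>x. (r (h x), 0))"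
      using univ_eq[OF assms(3) assms(1) l0 h1 _ h2] h(2) by simp
    then have "\<forall>x. r (h x) = x" by (metis prod.inject)
    then show ?thesis using h(1) by blast
  qed
  then show ?thesis using PK by blast
qed

end
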